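(* Let $A$ be an invertible $n$-by-$n$ doubly nonnegative matrix and let $W=[w_{ij}]$ be its sign change matrix. Then: (1) if $w_{ij}=0$ or $w_{ij}=1$, the critical exponent of the $i,j$-entry of $A$ is $0$; (2) if $w_{ij}=2$, the critical exponent of the $i,j$-entry of $A$ is at most $1$.
   Context: A real matrix is doubly nonnegative if it is symmetric, positive semidefinite, and entry-wise nonnegative. Write $A=UDU^T$ with $U=[u_{ij}]$ real orthogonal and $D=\mathrm{diag}(\lambda_1,\dots,\lambda_n)$, $\lambda_1\ge\cdots\ge\lambda_n>0$; for real $t\ge 0$, $A^t=UD^tU^T$ (so $A^0=I_n$), and $(A^t)_{ij}=\sum_k u_{ik}u_{jk}\lambda_k^t$. The sign change matrix $W$ has $w_{ij}$ equal to the number of sign changes in the coefficient sequence $(u_{i1}u_{j1},\dots,u_{in}u_{jn})$, arranged in decreasing order of the corresponding eigenvalues (zeros ignored). The critical exponent of the $i,j$-entry of $A$ is the least $m\ge 0$ such that $(A^t)_{ij}\ge 0$ for all $t\ge m$. *)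

theory Defs
  imports Complex_Main "Jordan_Normal_Form.Matrix"
begin

definition doubly_nonnegative :: "nat \<Rightarrow> real mat \<Rightarrow> bool" where
  "doubly_nonnegative n A \<longleftrightarrow>
     A \<in> carrier_mat n n \<and> A\<^sup>T = A \<and>
     (\<forall>x \<in> carrier_vec n. x \<bullet> (A *\<^sub>v x) \<ge> 0) \<and>
     (\<forall>i<n. \<forall>j<n. A $$ (i,j) \<ge> 0)"

definition real_orthogonal :: "nat \<Rightarrow> real mat \<Rightarrow> bool" where
  "real_orthogonal n U \<longleftrightarrow> U \<in> carrier_mat n n \<and> U * U\<^sup>T = 1\<^sub>m n \<and> U\<^sup>T * U = 1\<^sub>m n"

definition sign_changes :: "real list \<Rightarrow> nat" where
  "sign_changes xs = (let ys = filter (\<lambda>x. x \<noteq> 0) xs in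
     length (filter (\<lambda>k. ys ! k * ys ! (Suc k) < 0) [0..<length ys - 1]))"

(* entry w_ij of the sign change matrix for the decomposition A = U diag(lam) U^T,
   with columns of U ordered by decreasing eigenvalues lam 0 >= ... >= lam (n-1) *)
definition sign_change_entry :: "nat \<Rightarrow> real mat \<Rightarrow> nat \<Rightarrow> nat \<Rightarrow> nat" where
  "sign_change_entry n U i j = sign_changes (map (\<lambda>k. U $$ (i,k) * U $$ (j,k)) [0..<n])"

(* (A^t)_ij = sum_k u_ik u_jk lam_k^t, where A = U diag(lam) U^T *)
definition mat_rpow_entry :: "nat \<Rightarrow> real mat \<Rightarrow> (nat \<Rightarrow> real) \<Rightarrow> real \<Rightarrow> nat \<Rightarrow> nat \<Rightarrow> real" where
  "mat_rpow_entry n U lam t i j = (\<Sum>k<n. U $$ (i,k) * U $$ (j,k) * lam k powr t)"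

definition critical_exponent :: "nat \<Rightarrow> real mat \<Rightarrow> (nat \<Rightarrow> real) \<Rightarrow> nat \<Rightarrow> nat \<Rightarrow> real" where
  "critical_exponent n U lam i j =
     (LEAST m::real. m \<ge> 0 \<and> (\<forall>t\<ge>m. mat_rpow_entry n U lam t i j \<ge> 0))"

end

theory Submission
  imports Defs
begin

lemma entry_UDUt:
  fixes U :: "real mat"
  assumes U: "U \<in> carrier_mat n n" and i: "i < n" and j: "j < n"
  shows "(U * mat_diag n lam * U\<^sup>T) $$ (i,j) = (\<Sum>k<n. U $$ (i,k) * U $$ (j,k) * lam k)"
  unfolding mat_diag_mult_right[OF U] using U i j
  by (simp add: scalar_prod_def lessThan_atLeast0 mult_ac)

lemma entry_UUt:
  fixes U :: "real mat"
  assumes U: "U \<in> carrier_mat n n" and i: "i < n" and j: "j < n"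
  shows "(U * U\<^sup>T) $$ (i,j) = (\<Sum>k<n. U $$ (i,k) * U $$ (j,k))"
  using U i j by (simp add: scalar_prod_def lessThan_atLeast0)

lemma entry_UtU:
  fixes U :: "real mat"
  assumes U: "U \<in> carrier_mat n n" and i: "i < n" and j: "j < n"
  shows "(U\<^sup>T * U) $$ (i,j) = (\<Sum>k<n. U $$ (k,i) * U $$ (k,j))"
  using U i j by (simp add: scalar_prod_def lessThan_atLeast0)
definition adj :: "real list \<Rightarrow> nat" where
  "adj ys = length (filter (\<lambda>k. ys ! k * ys ! (Suc k) < 0) [0..<length ys - 1])"

lemma sc_adj: "sign_changes xs = adj (filter (\<lambda>x. x \<noteq> 0) xs)"
  unfolding sign_changes_def adj_def Let_def by simp

lemma adj_cons2: "adj (y#z#zs) = (if y*z<0 then 1 else 0) + adj (z#zs)"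
proof -
  let ?P = "\<lambda>k. (y#z#zs)!k*(y#z#zs)!Suc k<0"
  have e: "[0..<length (y#z#zs) - 1] = 0 # map Suc [0..<length (z#zs) - 1]"
    by (simp only: length_Cons diff_Suc_1 map_Suc_upt) (rule upt_conv_Cons, simp)
  have "adj (y#z#zs) = length (filter ?P (0 # map Suc [0..<length (z#zs) - 1]))"
    unfolding adj_def e ..
  also have "\<dots> = (if y*z<0 then 1 else 0) + length (filter (?P \<circ> Suc) [0..<length (z#zs) - 1])"
    by (simp only: filter.simps filter_map length_map) simp
  also have "?P \<circ> Suc = (\<lambda>k. (z#zs)!k*(z#zs)!Suc k<0)" by (simp add: fun_eq_iff)
  finally show ?thesis unfolding adj_def .
qed

fun okb :: "real \<Rightarrow> nat \<Rightarrow> real list \<Rightarrow> bool" where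
  "okb s 0 xs = (\<forall>x\<in>set xs. s*x \<ge> 0)"
| "okb s (Suc m) xs = (\<exists>a b. xs = a@b \<and> (\<forall>x\<in>set a. s*x\<ge>0) \<and> okb (-s) m b)"

lemma okb_zero: "\<forall>x\<in>set xs. x = 0 \<Longrightarrow> okb s m xs"
proof (induction m arbitrary: s)
  case 0 then show ?case by auto
next
  case (Suc m) then show ?case by (intro okb.simps(2)[THEN iffD2] exI[of _ "[]"] exI[of _ xs]) auto
qed

lemma okb_cons: assumes "okb s m xs" "s*x \<ge> 0" shows "okb s m (x#xs)"
proof (cases m)
  case 0 then show ?thesis using assms by auto
next
  case (Suc m')
  then obtain a b where ab: "xs = a@b" "\<forall>y\<in>set a. s*y\<ge>0" "okb (-s) m' b" using assms by auto
  have "x#xs = (x#a)@b" "\<forall>y\<in>set (x#a). s*y\<ge>0" using ab assms(2) by auto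
  then show ?thesis unfolding Suc okb.simps using ab(3) by blast
qed

lemma okb_main:
  "sign_changes xs \<le> m \<Longrightarrow> (\<forall>z zs. filter (\<lambda>x. x\<noteq>0) xs = z#zs \<longrightarrow> s*z > 0) \<Longrightarrow> okb s m xs"
proof (induction xs arbitrary: m s)
  case Nil then show ?case by (simp add: okb_zero)
next
  case (Cons x xs)
  note IH = Cons.IH
  note P = Cons.prems
  show ?case
  proof (cases "x = 0")
    case True
    then have "sign_changes xs \<le> m" using P by (simp add: sc_adj)
    moreover have "\<forall>z zs. filter (\<lambda>x. x\<noteq>0) xs = z#zs \<longrightarrow> s*z > 0" using P True by simp
    ultimately have "okb s m xs" by (rule IH)
    then show ?thesis by (rule okb_cons) (simp add: True)
  next
    case False
    then have sx: "s*x > 0" using P(2) by simp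
    show ?thesis
    proof (cases "filter (\<lambda>x. x\<noteq>0) xs")
      case Nil
      then have "\<forall>y\<in>set xs. y = 0" by (simp add: filter_empty_conv)
      then have "okb s m xs" by (rule okb_zero)
      then show ?thesis by (rule okb_cons) (use sx in simp)
    next
      case (Cons z zs)
      note fz = this
      then have "z \<in> set (filter (\<lambda>x. x\<noteq>0) xs)" by simp
      then have z0: "z \<noteq> 0" by simp
      have sc: "sign_changes (x#xs) = (if x*z<0 then 1 else 0) + sign_changes xs"
        using fz False by (simp add: sc_adj adj_cons2)
      show ?thesis
      proof (cases "x*z < 0")
        case True
        then obtain m' where m: "m = Suc m'" using sc P(1) by (cases m) auto
        have a1: "sign_changes xs \<le> m'" using sc P(1) True m by simp
        have a2: "(-s)*z > 0"
          using sx True by (auto simp: zero_less_mult_iff mult_less_0_iff)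
        have "\<forall>z' zs'. filter (\<lambda>x. x\<noteq>0) xs = z'#zs' \<longrightarrow> (-s)*z' > 0"
          using fz a2 by simp
        then have "okb (-s) m' xs" using IH[OF a1] by blast
        moreover have "x#xs = [x]@xs" "\<forall>y\<in>set [x]. s*y\<ge>0" using sx by auto
        ultimately show ?thesis unfolding m okb.simps by blast
      next
        case False
        have "x*z \<noteq> 0" using z0 \<open>x\<noteq>0\<close> by simp
        then have xz: "x*z > 0" using False by linarith
        have "s*z > 0"
          using sx xz by (auto simp: zero_less_mult_iff)
        then have b2: "\<forall>z' zs'. filter (\<lambda>x. x\<noteq>0) xs = z'#zs' \<longrightarrow> s*z' > 0"
          using fz by simp
        have b1: "sign_changes xs \<le> m" using sc P(1) False by simp
        have "okb s m xs" by (rule IH[OF b1 b2])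
        then show ?thesis by (rule okb_cons) (use sx in simp)
      qed
    qed
  qed
qed

lemma okb_exists: assumes h: "sign_changes xs \<le> m" shows "\<exists>s. (s = 1 \<or> s = -1) \<and> okb s m xs"
proof (cases "filter (\<lambda>x. x\<noteq>0) xs")
  case Nil
  then have "\<forall>y\<in>set xs. y = 0" by (simp add: filter_empty_conv)
  then have "okb 1 m xs" by (rule okb_zero)
  then show ?thesis by blast
next
  case (Cons z zs)
  then have "z \<in> set (filter (\<lambda>x. x\<noteq>0) xs)" by simp
  then have z0: "z \<noteq> 0" by simp
  show ?thesis
  proof (cases "z > 0")
    case True
    then have "okb 1 m xs" using Cons by (intro okb_main[OF h]) simp
    then show ?thesis by blast
  next
    case False
    then have "okb (-1) m xs" using Cons z0 by (intro okb_main[OF h]) simp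
    then show ?thesis by blast
  qed
qed


definition E :: "nat \<Rightarrow> (nat \<Rightarrow> real) \<Rightarrow> (nat \<Rightarrow> real) \<Rightarrow> real \<Rightarrow> real" where
  "E n d b t = (\<Sum>k<n. d k * exp (t * b k))"

lemma E_shift: "E n d b t = exp (t * g) * E n d (\<lambda>k. b k - g) t"
  unfolding E_def sum_distrib_left
proof (rule sum.cong[OF refl])
  fix k
  have "exp (t * b k) = exp (t * g) * exp (t * (b k - g))"
    by (simp add: exp_add[symmetric] algebra_simps)
  then show "d k * exp (t * b k) = exp (t * g) * (d k * exp (t * (b k - g)))" by simp
qed

lemma E_deriv: "(E n d b has_real_derivative E n (\<lambda>k. d k * b k) b t) (at t)"
  unfolding E_def
  by (auto intro!: derivative_eq_intros sum.cong simp: mult_ac)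

lemma term_mono:
  fixes s d b :: real
  assumes "s * d * b \<ge> 0" "t \<le> t'"
  shows "s * (d * exp (t * b)) \<le> s * (d * exp (t' * b))"
proof (cases "b = 0")
  case True then show ?thesis by simp
next
  case False
  show ?thesis
  proof (cases "b > 0")
    case True
    then have sd: "s * d \<ge> 0" using assms(1) by (simp add: zero_le_mult_iff)
    have "exp (t*b) \<le> exp (t'*b)" using True assms(2) by (simp add: mult_right_mono)
    then have "(s*d) * exp (t*b) \<le> (s*d) * exp (t'*b)" using sd by (rule mult_left_mono)
    then show ?thesis by (simp add: mult_ac)
  next
    case False
    then have b: "b < 0" using \<open>b \<noteq> 0\<close> by simp
    then have sd: "s * d \<le> 0" using assms(1) by (simp add: zero_le_mult_iff)
    have "exp (t'*b) \<le> exp (t*b)" using b assms(2) by (simp add: mult_right_mono_neg)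
    then have "(s*d) * exp (t*b) \<le> (s*d) * exp (t'*b)" using sd by (rule mult_left_mono_neg)
    then show ?thesis by (simp add: mult_ac)
  qed
qed

lemma E_mono:
  assumes "\<And>k. k < n \<Longrightarrow> s * d k * b k \<ge> 0" "t \<le> t'"
  shows "s * E n d b t \<le> s * E n d b t'"
  unfolding E_def sum_distrib_left
  by (rule sum_mono) (use assms term_mono in auto)

lemma E_cont: "continuous_on UNIV (E n d b)"
  unfolding E_def by (intro continuous_intros)


lemma block2_pos:
  fixes a c :: "nat \<Rightarrow> real" and s :: real
  assumes anti: "\<And>k l. k \<le> l \<Longrightarrow> l < n \<Longrightarrow> a l \<le> a k"
    and natpos: "\<And>m::nat. E n c a (real m) \<ge> 0"
    and s: "s = 1 \<or> s = -1"
    and p: "p \<le> n"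
    and b1: "\<And>k. k < p \<Longrightarrow> s * c k \<ge> 0"
    and b2: "\<And>k. p \<le> k \<Longrightarrow> k < n \<Longrightarrow> s * c k \<le> 0"
    and t: "t \<ge> 0"
  shows "E n c a t \<ge> 0"
proof -
  define al where "al = a (min p (n - 1))"
  define h where "h = E n c (\<lambda>k. a k - al)"
  have Eh: "E n c a x = exp (x * al) * h x" for x
    unfolding h_def by (rule E_shift)
  have hnat: "h (real m) \<ge> 0" for m :: nat
  proof -
    have "exp (real m * al) * h (real m) \<ge> 0" using natpos[of m] Eh by simp
    then show ?thesis by (simp add: zero_le_mult_iff)
  qed
  have coef: "s * c k * (a k - al) \<ge> 0" if k: "k < n" for k
  proof (cases "k < p")
    case True
    then have "a k \<ge> al" unfolding al_def using k by (intro anti) auto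
    then show ?thesis using b1[OF True] by simp
  next
    case False
    then have "min p (n-1) = p" using k by auto
    then have "a k \<le> al" unfolding al_def using False k by (intro anti) auto
    then show ?thesis using b2[of k] False k by (simp add: mult_nonpos_nonpos)
  qed
  have mono: "s * h x \<le> s * h y" if "x \<le> y" for x y
    unfolding h_def by (rule E_mono) (use coef that in auto)
  define fl where "fl = nat \<lfloor>t\<rfloor>"
  define ce where "ce = nat \<lceil>t\<rceil>"
  have "real fl \<le> t" "t \<le> real ce" unfolding fl_def ce_def using t by auto
  have "h t \<ge> 0"
    using s
  proof
    assume "s = 1"
    then show ?thesis using mono[OF \<open>real fl \<le> t\<close>] hnat[of fl] by simp
  next
    assume "s = -1"
    then show ?thesis using mono[OF \<open>t \<le> real ce\<close>] hnat[of ce] by simp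
  qed
  then show ?thesis using Eh by simp
qed

lemma block3_pos:
  fixes a c :: "nat \<Rightarrow> real" and s :: real
  assumes anti: "\<And>k l. k \<le> l \<Longrightarrow> l < n \<Longrightarrow> a l \<le> a k"
    and natpos: "\<And>m::nat. E n c a (real m) \<ge> 0"
    and zero: "E n c a 0 = 0"
    and s: "s = 1 \<or> s = -1"
    and pq: "p \<le> q" "q \<le> n"
    and b1: "\<And>k. k < p \<Longrightarrow> s * c k \<ge> 0"
    and b2: "\<And>k. p \<le> k \<Longrightarrow> k < q \<Longrightarrow> s * c k \<le> 0"
    and b3: "\<And>k. q \<le> k \<Longrightarrow> k < n \<Longrightarrow> s * c k \<ge> 0"
    and t: "t \<ge> 1"
  shows "E n c a t \<ge> 0"
proof -
  define al where "al = a (min p (n - 1))"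
  define be where "be = a (min q (n - 1))"
  define h where "h = E n c (\<lambda>k. a k - al)"
  define d where "d = (\<lambda>k. c k * (a k - al))"
  define g where "g = E n d (\<lambda>k. a k - be)"
  have Eh: "E n c a x = exp (x * al) * h x" for x
    unfolding h_def by (rule E_shift)
  have hnat: "h (real m) \<ge> 0" for m :: nat
  proof -
    have "exp (real m * al) * h (real m) \<ge> 0" using natpos[of m] Eh by simp
    then show ?thesis by (simp add: zero_le_mult_iff)
  qed
  have h0: "h 0 = 0" using zero Eh[of 0] by simp
  have hd: "(h has_real_derivative exp (x * (be - al)) * g x) (at x)" for x
  proof -
    have "(h has_real_derivative E n d (\<lambda>k. a k - al) x) (at x)"
      unfolding h_def d_def by (rule E_deriv)
    moreover have "E n d (\<lambda>k. a k - al) x = exp (x * (be - al)) * g x"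
      unfolding g_def by (subst E_shift[of _ _ _ _ "be - al"]) simp
    ultimately show ?thesis by simp
  qed
  have coef: "s * d k * (a k - be) \<ge> 0" if k: "k < n" for k
  proof -
    consider "k < p" | "p \<le> k" "k < q" | "q \<le> k" by linarith
    then show ?thesis
    proof cases
      case 1
      then have "a k \<ge> al" unfolding al_def using k by (intro anti) auto
      moreover have "a k \<ge> be" unfolding be_def using k 1 pq by (intro anti) auto
      ultimately have "(s * c k) * ((a k - al) * (a k - be)) \<ge> 0"
        using b1[OF 1] by (intro mult_nonneg_nonneg[OF _ mult_nonneg_nonneg]) auto
      then show ?thesis unfolding d_def by (simp add: mult_ac)
    next
      case 2
      then have "min p (n-1) = p" using k by auto
      then have "a k \<le> al" unfolding al_def using 2 k by (intro anti) auto
      moreover have "a k \<ge> be" unfolding be_def using k 2 by (intro anti) auto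
      ultimately have "(s * c k) * ((a k - al) * (a k - be)) \<ge> 0"
        using b2[OF 2] by (intro mult_nonpos_nonpos[OF _ mult_nonpos_nonneg]) auto
      then show ?thesis unfolding d_def by (simp add: mult_ac)
    next
      case 3
      then have "min q (n-1) = q" using k by auto
      then have "a k \<le> be" unfolding be_def using 3 k by (intro anti) auto
      moreover have "a k \<le> al" unfolding al_def using 3 k pq by (intro anti) auto
      ultimately have "(s * c k) * ((a k - al) * (a k - be)) \<ge> 0"
        using b3[OF 3 k] by (intro mult_nonneg_nonneg[OF _ mult_nonpos_nonpos]) auto
      then show ?thesis unfolding d_def by (simp add: mult_ac)
    qed
  qed
  have gmono: "s * g x \<le> s * g y" if "x \<le> y" for x y
    unfolding g_def by (rule E_mono) (use coef that in auto)
  have sg: "(g x \<ge> 0) = (exp (x * (be - al)) * g x \<ge> 0)" for x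
    by (simp add: zero_le_mult_iff)
  have "h t \<ge> 0"
    using s
  proof
    assume s1: "s = 1"
    obtain z where z: "0 < z" "z < 1" "h 1 - h 0 = (1 - 0) * (exp (z * (be - al)) * g z)"
      using MVT2[of 0 1 h "\<lambda>x. exp (x * (be - al)) * g x"] hd by auto
    have "g z \<ge> 0" using z(3) hnat[of 1] h0 sg[of z] by simp
    show ?thesis
    proof (cases "t = 1")
      case True then show ?thesis using hnat[of 1] by simp
    next
      case False
      then have t1: "1 < t" using t by simp
      obtain z' where z': "1 < z'" "z' < t" "h t - h 1 = (t - 1) * (exp (z' * (be - al)) * g z')"
        using MVT2[OF t1, of h "\<lambda>x. exp (x * (be - al)) * g x"] hd by auto
      have "g z' \<ge> g z" using gmono[of z z'] s1 z z' by simp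
      then have "g z' \<ge> 0" using \<open>g z \<ge> 0\<close> by simp
      then have "exp (z' * (be - al)) * g z' \<ge> 0" by simp
      then have "h t - h 1 \<ge> 0" using z'(3) t1 by simp
      then show ?thesis using hnat[of 1] by simp
    qed
  next
    assume s1: "s = -1"
    define m where "m = nat \<lfloor>t\<rfloor>"
    have m1: "real m \<le> t" "t < real m + 1" unfolding m_def using t by linarith+
    show ?thesis
    proof (rule ccontr)
      assume neg: "\<not> h t \<ge> 0"
      then have tm: "real m < t" using m1 hnat[of m] by (cases "real m = t") auto
      obtain z1 where z1: "real m < z1" "z1 < t" "h t - h (real m) = (t - real m) * (exp (z1 * (be - al)) * g z1)"
        using MVT2[OF tm, of h "\<lambda>x. exp (x * (be - al)) * g x"] hd by auto
      have "(t - real m) * (exp (z1 * (be - al)) * g z1) < 0" using z1(3) neg hnat[of m] by simp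
      then have g1: "g z1 < 0" using tm by (simp add: mult_less_0_iff)
      have tm2: "t < real (m+1)" using m1 by simp
      obtain z2 where z2: "t < z2" "z2 < real (m+1)" "h (real (m+1)) - h t = (real (m+1) - t) * (exp (z2 * (be - al)) * g z2)"
        using MVT2[OF tm2, of h "\<lambda>x. exp (x * (be - al)) * g x"] hd by auto
      have "(real (m+1) - t) * (exp (z2 * (be - al)) * g z2) > 0" using z2(3) neg hnat[of "m+1"] by simp
      then have g2: "g z2 > 0" using tm2 by (simp add: zero_less_mult_iff)
      have "- g z1 \<le> - g z2" using gmono[of z1 z2] s1 z1 z2 by simp
      then show False using g1 g2 by simp
    qed
  qed
  then show ?thesis using Eh by simp
qed


lemma least0:
  fixes G :: "real \<Rightarrow> real"
  assumes "\<forall>t\<ge>0. G t \<ge> 0"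
  shows "(LEAST m::real. m \<ge> 0 \<and> (\<forall>t\<ge>m. G t \<ge> 0)) = 0"
  by (rule Least_equality) (use assms in auto)

lemma least1:
  fixes G :: "real \<Rightarrow> real"
  assumes cont: "continuous_on UNIV G" and pos: "\<forall>t\<ge>1. G t \<ge> 0"
  shows "(LEAST m::real. m \<ge> 0 \<and> (\<forall>t\<ge>m. G t \<ge> 0)) \<le> 1"
proof -
  define S where "S = {m::real. m \<ge> 0 \<and> (\<forall>t\<ge>m. G t \<ge> 0)}"
  define L where "L = Inf S"
  have S1: "1 \<in> S" unfolding S_def using pos by auto
  then have Sne: "S \<noteq> {}" by auto
  have bdd: "bdd_below S" unfolding S_def by (rule bdd_belowI[of _ 0]) auto
  have L1: "L \<le> 1" unfolding L_def by (rule cInf_lower[OF S1 bdd])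
  have L0: "L \<ge> 0" unfolding L_def by (rule cInf_greatest[OF Sne]) (auto simp: S_def)
  have Lle: "L \<le> y" if "y \<in> S" for y unfolding L_def by (rule cInf_lower[OF that bdd])
  have gt: "G t \<ge> 0" if "t > L" for t
  proof -
    have "Inf S < t" using that unfolding L_def .
    then obtain x where "x \<in> S" "x < t" using cInf_less_iff[OF Sne bdd] by auto
    then show ?thesis unfolding S_def by auto
  qed
  have GL: "G L \<ge> 0"
  proof (rule tendsto_lowerbound)
    have "isCont G L" using cont by (simp add: continuous_on_eq_continuous_at)
    then have "(G \<longlongrightarrow> G L) (at L)" by (simp add: isCont_def)
    then show "(G \<longlongrightarrow> G L) (at_right L)" by (rule tendsto_mono[OF at_le, rotated]) simp
    show "\<forall>\<^sub>F i in at_right L. 0 \<le> G i"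
      using eventually_at_right_less[of L] by eventually_elim (rule gt)
    show "\<not> trivial_limit (at_right L)" by simp
  qed
  have PL: "L \<ge> 0 \<and> (\<forall>t\<ge>L. G t \<ge> 0)"
    using L0 gt GL by (auto simp: le_less)
  have "(LEAST m::real. m \<ge> 0 \<and> (\<forall>t\<ge>m. G t \<ge> 0)) = L"
    by (rule Least_equality) (use PL Lle in \<open>auto simp: S_def\<close>)
  then show ?thesis using L1 by simp
qed


lemma pow_step:
  fixes U :: "real mat"
  assumes orth: "\<And>k k'. k < n \<Longrightarrow> k' < n \<Longrightarrow> (\<Sum>l<n. U$$(l,k)*U$$(l,k')) = (if k = k' then 1 else 0)"
  shows "(\<Sum>l<n. (\<Sum>k<n. U$$(i,k)*U$$(l,k)*lam k ^ m) * (\<Sum>k<n. U$$(l,k)*U$$(j,k)*lam k))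
        = (\<Sum>k<n. U$$(i,k)*U$$(j,k)*lam k ^ Suc m)"
proof -
  have "(\<Sum>l<n. (\<Sum>k<n. U$$(i,k)*U$$(l,k)*lam k ^ m) * (\<Sum>k<n. U$$(l,k)*U$$(j,k)*lam k))
      = (\<Sum>l<n. \<Sum>k<n. \<Sum>k'<n. (U$$(i,k)*lam k ^ m*U$$(j,k')*lam k') * (U$$(l,k)*U$$(l,k')))"
    by (rule sum.cong[OF refl], subst sum_product, rule sum.cong[OF refl], rule sum.cong[OF refl]) (simp add: mult_ac)
  also have "\<dots> = (\<Sum>k<n. \<Sum>k'<n. \<Sum>l<n. (U$$(i,k)*lam k ^ m*U$$(j,k')*lam k') * (U$$(l,k)*U$$(l,k')))"
    by (subst sum.swap, rule sum.cong[OF refl], rule sum.swap)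
  also have "\<dots> = (\<Sum>k<n. \<Sum>k'<n. (U$$(i,k)*lam k ^ m*U$$(j,k')*lam k') * (if k = k' then 1 else 0))"
    by (rule sum.cong[OF refl], rule sum.cong[OF refl]) (simp add: sum_distrib_left[symmetric] orth)
  also have "\<dots> = (\<Sum>k<n. U$$(i,k)*U$$(j,k)*lam k ^ Suc m)"
    by (rule sum.cong[OF refl]) (simp add: mult_ac if_distrib[of "\<lambda>x. _ * x"] cong: if_cong)
  finally show ?thesis .
qed


lemma map_nth_split:
  assumes "map c [0..<n] = a @ b" "k < n"
  shows "c k = (if k < length a then a ! k else b ! (k - length a))"
    "length a + length b = n"
proof -
  have "length (map c [0..<n]) = length (a@b)" using assms(1) by simp
  then show len: "length a + length b = n" by simp
  have "c k = map c [0..<n] ! k" using assms(2) by simp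
  also have "\<dots> = (a@b) ! k" using assms(1) by simp
  finally show "c k = (if k < length a then a ! k else b ! (k - length a))" by (simp add: nth_append)
qed

lemma okb1_idx:
  assumes "okb s (Suc 0) (map c [0..<n])"
  shows "\<exists>p\<le>n. (\<forall>k<p. s*c k \<ge> 0) \<and> (\<forall>k. p\<le>k \<longrightarrow> k<n \<longrightarrow> s*c k \<le> 0)"
proof -
  obtain a b where ab: "map c [0..<n] = a@b" "\<forall>x\<in>set a. s*x\<ge>0" "\<forall>x\<in>set b. (-s)*x\<ge>0"
    using assms by auto
  have len: "length a + length b = n" using map_nth_split(2)[OF ab(1)] ab(1)
    by (metis length_append length_map length_upt minus_nat.diff_0)
  show ?thesis
  proof (intro exI[of _ "length a"] conjI allI impI)
    show "length a \<le> n" using len by simp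
    fix k
    { assume "k < length a"
      then show "s * c k \<ge> 0" using map_nth_split(1)[OF ab(1), of k] len ab(2) by auto }
    { assume "length a \<le> k" "k < n"
      then have "k - length a < length b" using len by simp
      then have "b ! (k - length a) \<in> set b" by simp
      then show "s * c k \<le> 0" using map_nth_split(1)[OF ab(1), of k] \<open>length a \<le> k\<close> \<open>k<n\<close> ab(3) by auto }
  qed
qed

lemma okb2_idx:
  assumes "okb s (Suc (Suc 0)) (map c [0..<n])"
  shows "\<exists>p q. p \<le> q \<and> q \<le> n \<and> (\<forall>k<p. s*c k \<ge> 0) \<and> (\<forall>k. p\<le>k \<longrightarrow> k<q \<longrightarrow> s*c k \<le> 0)
      \<and> (\<forall>k. q\<le>k \<longrightarrow> k<n \<longrightarrow> s*c k \<ge> 0)"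
proof -
  obtain a b where ab: "map c [0..<n] = a@b" "\<forall>x\<in>set a. s*x\<ge>0" "okb (-s) (Suc 0) b"
    using assms by auto
  obtain a' b' where ab': "b = a'@b'" "\<forall>x\<in>set a'. (-s)*x\<ge>0" "\<forall>x\<in>set b'. s*x\<ge>0"
    using ab(3) by auto
  have e: "map c [0..<n] = (a@a')@b'" using ab ab' by simp
  have len: "length a + length a' + length b' = n"
    using arg_cong[OF e, of length] by simp
  have r1: "\<forall>k<length a. s * c k \<ge> 0"
  proof (intro allI impI)
    fix k assume k: "k < length a"
    then have "c k = a ! k" using map_nth_split(1)[OF ab(1), of k] len by auto
    then show "s * c k \<ge> 0" using k ab(2) by auto
  qed
  have r2: "\<forall>k. length a \<le> k \<longrightarrow> k < length a + length a' \<longrightarrow> s * c k \<le> 0"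
  proof (intro allI impI)
    fix k assume k: "length a \<le> k" "k < length a + length a'"
    then have "c k = (a@a') ! k" using map_nth_split(1)[OF e, of k] len by auto
    also have "\<dots> = a' ! (k - length a)" using k by (simp add: nth_append)
    finally have "c k = a' ! (k - length a)" .
    moreover have "a' ! (k - length a) \<in> set a'" using k by simp
    ultimately show "s * c k \<le> 0" using ab'(2) by auto
  qed
  have r3: "\<forall>k. length a + length a' \<le> k \<longrightarrow> k < n \<longrightarrow> s * c k \<ge> 0"
  proof (intro allI impI)
    fix k assume k: "length a + length a' \<le> k" "k < n"
    then have "c k = b' ! (k - length (a@a'))" using map_nth_split(1)[OF e, of k] by auto
    moreover have "b' ! (k - length (a@a')) \<in> set b'" using k len by simp
    ultimately show "s * c k \<ge> 0" using ab'(3) by auto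
  qed
  have "length a \<le> length a + length a'" "length a + length a' \<le> n" using len by auto
  then show ?thesis using r1 r2 r3 by blast
qed


theorem lemma4p2:
  fixes n :: nat and A U :: "real mat" and lam :: "nat \<Rightarrow> real" and i j :: nat
  assumes "doubly_nonnegative n A"
    and "invertible_mat A"
    and "real_orthogonal n U"
    and "\<And>k. k < n \<Longrightarrow> lam k > 0"
    and "\<And>k l. k \<le> l \<Longrightarrow> l < n \<Longrightarrow> lam l \<le> lam k"
    and "A = U * mat_diag n lam * U\<^sup>T"
    and "i < n" and "j < n"
  shows "(sign_change_entry n U i j = 0 \<or> sign_change_entry n U i j = 1
            \<longrightarrow> critical_exponent n U lam i j = 0)
       \<and> (sign_change_entry n U i j = 2 \<longrightarrow> critical_exponent n U lam i j \<le> 1)"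
proof -
  have U: "U \<in> carrier_mat n n" and UUt: "U * U\<^sup>T = 1\<^sub>m n" and UtU: "U\<^sup>T * U = 1\<^sub>m n"
    using assms(3) unfolding real_orthogonal_def by auto
  have Anonneg: "\<And>l m. l < n \<Longrightarrow> m < n \<Longrightarrow> A $$ (l,m) \<ge> 0"
    using assms(1) unfolding doubly_nonnegative_def by auto
  have orth: "(\<Sum>l<n. U$$(l,k)*U$$(l,k')) = (if k = k' then 1 else 0)" if "k < n" "k' < n" for k k'
    using entry_UtU[OF U that] UtU that by simp
  have orth2: "(\<Sum>k<n. U$$(l,k)*U$$(l',k)) = (if l = l' then 1 else 0)" if "l < n" "l' < n" for l l'
    using entry_UUt[OF U that] UUt that by simp
  define c where "c = (\<lambda>k. U$$(i,k)*U$$(j,k))"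
  define a where "a = (\<lambda>k. ln (lam k))"
  define P where "P = (\<lambda>m i j. \<Sum>k<n. U$$(i,k)*U$$(j,k)*lam k ^ m)"
  have FE: "mat_rpow_entry n U lam t i j = E n c a t" for t
    unfolding mat_rpow_entry_def E_def c_def a_def
  proof (rule sum.cong[OF refl])
    fix k assume "k \<in> {..<n}"
    then have "lam k \<noteq> 0" using assms(4)[of k] by auto
    then show "U $$ (i, k) * U $$ (j, k) * lam k powr t = U $$ (i, k) * U $$ (j, k) * exp (t * ln (lam k))"
      by (simp add: powr_def)
  qed
  have anti: "a l \<le> a k" if "k \<le> l" "l < n" for k l
    unfolding a_def using assms(4)[of l] assms(4)[of k] assms(5)[OF that] that by simp
  have P1: "P 1 l m = A $$ (l,m)" if "l < n" "m < n" for l m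
    unfolding P_def assms(6) using entry_UDUt[OF U that] by simp
  have Pnn: "\<forall>l<n. \<forall>m<n. P e l m \<ge> 0" for e
  proof (induction e)
    case 0
    show ?case by (auto simp: P_def orth2)
  next
    case (Suc e)
    show ?case
    proof (intro allI impI)
      fix l m assume lm: "l < n" "m < n"
      have "P (Suc e) l m = (\<Sum>l'<n. P e l l' * P 1 l' m)"
        unfolding P_def power_one_right by (rule pow_step[symmetric]) (use orth in auto)
      also have "\<dots> \<ge> 0"
        using Suc lm P1 Anonneg by (intro sum_nonneg mult_nonneg_nonneg) auto
      finally show "P (Suc e) l m \<ge> 0" .
    qed
  qed
  have natpos: "E n c a (real m) \<ge> 0" for m :: nat
  proof -
    have "E n c a (real m) = P m i j"
      unfolding FE[symmetric] mat_rpow_entry_def P_def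
      by (rule sum.cong[OF refl]) (use assms(4) in \<open>auto simp: powr_realpow\<close>)
    then show ?thesis using Pnn assms(7,8) by simp
  qed
  have F0: "E n c a 0 = (if i = j then 1 else 0)"
    unfolding E_def c_def using orth2[OF assms(7,8)] by simp
  have crit: "critical_exponent n U lam i j = (LEAST m::real. m \<ge> 0 \<and> (\<forall>t\<ge>m. E n c a t \<ge> 0))"
    unfolding critical_exponent_def FE ..
  have sc: "sign_change_entry n U i j = sign_changes (map c [0..<n])"
    unfolding sign_change_entry_def c_def ..
  have ii: "E n c a t \<ge> 0" if "i = j" for t
    unfolding E_def c_def using that by (intro sum_nonneg) auto
  show ?thesis
  proof (intro conjI impI)
    assume w: "sign_change_entry n U i j = 0 \<or> sign_change_entry n U i j = 1"
    then have "sign_changes (map c [0..<n]) \<le> Suc 0" using sc by auto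
    then obtain s where s: "s = 1 \<or> s = -1" "okb s (Suc 0) (map c [0..<n])"
      using okb_exists by blast
    obtain p where p: "p \<le> n" "\<forall>k<p. s*c k \<ge> 0" "\<forall>k. p\<le>k \<longrightarrow> k<n \<longrightarrow> s*c k \<le> 0"
      using okb1_idx[OF s(2)] by blast
    have "\<forall>t\<ge>0. E n c a t \<ge> 0"
      using block2_pos[of n a c s p] anti natpos s(1) p by blast
    then show "critical_exponent n U lam i j = 0" unfolding crit by (rule least0)
  next
    assume w: "sign_change_entry n U i j = 2"
    then have "sign_changes (map c [0..<n]) \<le> Suc (Suc 0)" using sc by auto
    then obtain s where s: "s = 1 \<or> s = -1" "okb s (Suc (Suc 0)) (map c [0..<n])"
      using okb_exists by blast
    obtain p q where pq: "p \<le> q" "q \<le> n" "\<forall>k<p. s*c k \<ge> 0" "\<forall>k. p\<le>k \<longrightarrow> k<q \<longrightarrow> s*c k \<le> 0"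
        "\<forall>k. q\<le>k \<longrightarrow> k<n \<longrightarrow> s*c k \<ge> 0"
      using okb2_idx[OF s(2)] by blast
    have "\<forall>t\<ge>1. E n c a t \<ge> 0"
    proof (cases "i = j")
      case True then show ?thesis using ii by blast
    next
      case False
      then have z: "E n c a 0 = 0" using F0 by simp
      show ?thesis
        using block3_pos[of n a c s p q] anti natpos z s(1) pq by blast
    qed
    then show "critical_exponent n U lam i j \<le> 1" unfolding crit
      by (rule least1[OF E_cont])
  qed
qed

end
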